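(* There is no sequence of maps $\varphi_0,\varphi_1,\varphi_2,\ldots$, each defined on the ideal $\mathcal{M}$ of meager subsets of $\mathbb{R}$ and taking values in the family of closed nowhere dense subsets of $\mathbb{R}$, such that both of the following hold: (a) $A\subseteq\bigcup_{i<\omega}\varphi_i(A)$ for every meager $A\subseteq\mathbb{R}$; (b) $\varphi_i(A+r)=\varphi_i(A)+r$ for every meager $A$, every $r\in\mathbb{R}$ and every $i<\omega$.
   Context: $A+r=\{a+r:a\in A\}$. *)

theory Defs
  imports "HOL-Analysis.Analysis"
begin

definition nowhere_dense :: "real set \<Rightarrow> bool" where
  "nowhere_dense S \<longleftrightarrow> interior (closure S) = {}"

definition meager :: "real set \<Rightarrow> bool" where
  "meager A \<longleftrightarrow> (\<exists>N :: nat \<Rightarrow> real set. (\<forall>n. nowhere_dense (N n)) \<and> A \<subseteq> (\<Union>n. N n))"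

definition translate :: "real set \<Rightarrow> real \<Rightarrow> real set" where
  "translate A r = (\<lambda>a. a + r) ` A"

end

theory Submission
  imports Defs
begin

lemma meager_rats: "meager \<rat>"
proof -
  have ne: "(\<rat>::real set) \<noteq> {}" using Rats_0 by blast
  define N where "N = (\<lambda>n::nat. {from_nat_into (\<rat>::real set) n})"
  have "\<forall>n. nowhere_dense (N n)"
    unfolding N_def nowhere_dense_def by simp
  moreover have "\<rat> \<subseteq> (\<Union>n. N n)"
    using range_from_nat_into[OF ne countable_rat] unfolding N_def by auto
  ultimately show ?thesis unfolding meager_def by blast
qed

lemma translate_rats: "q \<in> \<rat> \<Longrightarrow> translate \<rat> q = \<rat>"
proof -
  assume q: "q \<in> \<rat>"
  have "translate \<rat> q \<subseteq> \<rat>" unfolding translate_def using q by auto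
  moreover have "\<rat> \<subseteq> translate \<rat> q"
  proof
    fix y :: real assume "y \<in> \<rat>"
    hence "y - q \<in> \<rat>" using q by auto
    thus "y \<in> translate \<rat> q" unfolding translate_def by (auto intro: image_eqI[where x="y - q"])
  qed
  ultimately show ?thesis by blast
qed

lemma dense_coset: "closure ((\<lambda>q. x + q) ` (\<rat>::real set)) = UNIV"
proof -
  have "y \<in> closure ((\<lambda>q. x + q) ` \<rat>)" for y :: real
  proof (subst closure_approachable, intro allI impI)
    fix e :: real assume e: "e > 0"
    obtain q where q: "q \<in> \<rat>" "y - x - e < q" "q < y - x"
      using Rats_dense_in_real[of "y - x - e" "y - x"] e by auto
    have "dist (x + q) y < e" using q by (simp add: dist_real_def)
    thus "\<exists>z\<in>(\<lambda>q. x + q) ` \<rat>. dist z y < e" using q(1) by blast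
  qed
  thus ?thesis by auto
qed

theorem mainTheorem1:
  shows "\<not> (\<exists>\<phi> :: nat \<Rightarrow> real set \<Rightarrow> real set.
            (\<forall>i A. meager A \<longrightarrow> closed (\<phi> i A) \<and> nowhere_dense (\<phi> i A))
          \<and> (\<forall>A. meager A \<longrightarrow> A \<subseteq> (\<Union>i. \<phi> i A))
          \<and> (\<forall>i A r. meager A \<longrightarrow> \<phi> i (translate A r) = translate (\<phi> i A) r))"
proof
  assume "\<exists>\<phi> :: nat \<Rightarrow> real set \<Rightarrow> real set.
            (\<forall>i A. meager A \<longrightarrow> closed (\<phi> i A) \<and> nowhere_dense (\<phi> i A))
          \<and> (\<forall>A. meager A \<longrightarrow> A \<subseteq> (\<Union>i. \<phi> i A))
          \<and> (\<forall>i A r. meager A \<longrightarrow> \<phi> i (translate A r) = translate (\<phi> i A) r)"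
  then obtain \<phi> :: "nat \<Rightarrow> real set \<Rightarrow> real set" where
    h1: "\<forall>i A. meager A \<longrightarrow> closed (\<phi> i A) \<and> nowhere_dense (\<phi> i A)" and
    h2: "\<forall>A. meager A \<longrightarrow> A \<subseteq> (\<Union>i. \<phi> i A)" and
    h3: "\<forall>i A r. meager A \<longrightarrow> \<phi> i (translate A r) = translate (\<phi> i A) r"
    by blast
  have "\<rat> \<subseteq> (\<Union>i. \<phi> i \<rat>)" using h2 meager_rats by blast
  hence "(0::real) \<in> (\<Union>i. \<phi> i \<rat>)" using Rats_0 by blast
  then obtain i x where x: "x \<in> \<phi> i \<rat>" by blast
  have inv: "x + q \<in> \<phi> i \<rat>" if q: "q \<in> \<rat>" for q
  proof -
    have "\<phi> i \<rat> = translate (\<phi> i \<rat>) q"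
      using h3 meager_rats translate_rats[OF q] by metis
    moreover have "x + q \<in> translate (\<phi> i \<rat>) q" using x unfolding translate_def by (auto simp: add.commute)
    ultimately show ?thesis by simp
  qed
  hence sub: "(\<lambda>q. x + q) ` \<rat> \<subseteq> \<phi> i \<rat>" by auto
  have cl: "closed (\<phi> i \<rat>)" and nd: "nowhere_dense (\<phi> i \<rat>)" using h1 meager_rats by auto
  have "closure ((\<lambda>q. x + q) ` \<rat>) \<subseteq> \<phi> i \<rat>"
    using closure_minimal[OF sub cl] .
  hence "\<phi> i \<rat> = UNIV" using dense_coset[of x] by auto
  thus False using nd unfolding nowhere_dense_def by simp
qed

end
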